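(* Let $n$ be a positive integer and $k$ an integer with $0\le k\le n$. Then $$e_k\left(\left\{\csc^2\left(\tfrac{(2j-1)\pi}{4n+2}\right) : j=1,\dots,n\right\}\right) = \frac{(n+k)!\,4^k}{(2k)!\,(n-k)!}.$$
   Context: $e_k(\alpha_1,\dots,\alpha_n)$ denotes the degree-$k$ elementary symmetric function of $\alpha_1,\dots,\alpha_n$ (with $e_0=1$). *)

theory Defs
  imports "HOL-Analysis.Analysis"
begin

definition esym :: "nat \<Rightarrow> ('i \<Rightarrow> real) \<Rightarrow> 'i set \<Rightarrow> real" where
  "esym k a I = (\<Sum>S\<in>{S. S \<subseteq> I \<and> card S = k}. \<Prod>j\<in>S. a j)"

definition csc :: "real \<Rightarrow> real" where
  "csc x = 1 / sin x"

end

theory Submission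
  imports Defs "HOL-Computational_Algebra.Polynomial"
begin


fun Qp :: "nat \<Rightarrow> real poly" where
  "Qp 0 = 1"
| "Qp (Suc 0) = [:1, -4:]"
| "Qp (Suc (Suc n)) = [:2, -4:] * Qp (Suc n) - Qp n"

lemma binom_aux:
  "(Suc (Suc a) choose Suc (Suc (2*m))) + (a choose Suc (Suc (2*m)))
   = 2 * (Suc a choose Suc (Suc (2*m))) + (a choose (2*m))"
  by (simp add: binomial_Suc_Suc)

lemma coeff_mult_lin: "coeff ([:2, -4:] * (p::real poly)) k = 2 * coeff p k - (if k = 0 then 0 else 4 * coeff p (k - 1))"
  by (cases k) (simp_all add: mult_pCons_left coeff_pCons)

lemma coeff_Qp: "coeff (Qp n) k = (-4) ^ k * real ((n + k) choose (2 * k))"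
proof (induction n arbitrary: k rule: Qp.induct)
  case 1
  then show ?case by (cases k) (auto simp: binomial_eq_0)
next
  case 2
  then show ?case
    apply (cases k) apply simp
    subgoal for m by (cases m) (auto simp: coeff_pCons binomial_eq_0 numeral_2_eq_2)
    done
next
  case (3 n)
  show ?case
  proof (cases k)
    case 0
    then show ?thesis using 3 by (simp add: coeff_mult_lin)
  next
    case (Suc m)
    have b: "real (Suc (Suc (n + m + 1)) choose Suc (Suc (2*m))) + real ((n+m+1) choose Suc (Suc (2*m)))
   = 2 * real (Suc (n+m+1) choose Suc (Suc (2*m))) + real ((n+m+1) choose (2*m))"
      using binom_aux[of "n+m+1" m] by (metis of_nat_add of_nat_mult of_nat_numeral)
    have e1: "Suc (Suc n) + k = Suc (Suc (n+m+1))" "2 * k = Suc (Suc (2*m))" "Suc n + k = Suc (n+m+1)"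
      "n + k = n+m+1" "Suc n + m = n + m + 1" using Suc by auto
    show ?thesis using 3 b unfolding Suc
      apply (simp only: Qp.simps coeff_diff coeff_mult_lin)
      apply (simp only: e1[unfolded Suc] if_False nat.simps diff_Suc_1)
      apply (simp add: algebra_simps)
      done
  qed
qed


lemma poly_factor:
  fixes p :: "real poly"
  assumes "finite S" "degree p = card S" "\<forall>s\<in>S. poly p s = 0"
  shows "p = smult (lead_coeff p) (\<Prod>s\<in>S. [:-s, 1:])"
  using assms
proof (induction S arbitrary: p rule: finite_induct)
  case empty
  then show ?case using degree_0_id[of p] by simp
next
  case (insert a S)
  have "[:-a, 1:] dvd p" using insert.prems by (simp add: poly_eq_0_iff_dvd)
  then obtain q where q: "p = [:-a, 1:] * q" by (elim dvdE)
  have "p \<noteq> 0" using insert by auto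
  hence "q \<noteq> 0" using q by auto
  have "degree ([:-a,1:]*q) = degree [:-a,1:] + degree q" by (rule degree_mult_eq) (use \<open>q \<noteq> 0\<close> in auto)
  hence "degree p = degree q + 1" using q by simp
  hence dq: "degree q = card S" using insert by simp
  have "\<forall>s\<in>S. poly q s = 0"
  proof
    fix s assume "s \<in> S"
    hence "s \<noteq> a" "poly p s = 0" using insert by auto
    thus "poly q s = 0" using q by simp
  qed
  hence qf: "q = smult (lead_coeff q) (\<Prod>s\<in>S. [:-s, 1:])" using insert.IH dq by blast
  have "lead_coeff p = lead_coeff q" by (simp only: q lead_coeff_mult) simp
  moreover have "p = [:-a,1:] * smult (lead_coeff q) (\<Prod>s\<in>S. [:-s, 1:])" using q qf by metis
  moreover have "(\<Prod>s\<in>insert a S. [:-s, 1:]) = [:-a,1:] * (\<Prod>s\<in>S. [:-s, 1:])"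
    using insert by (simp add: prod.insert)
  ultimately show ?case by (simp only: mult_smult_right)
qed

lemma vieta:
  fixes c :: "'i \<Rightarrow> real"
  assumes "finite A"
  shows "(\<Prod>j\<in>A. t * c j + 1) = (\<Sum>k\<le>card A. esym k c A * t ^ k)"
proof -
  have "(\<Prod>j\<in>A. t * c j + 1) = (\<Sum>X\<in>Pow A. (\<Prod>j\<in>X. t * c j) * (\<Prod>j\<in>A-X. 1))"
    by (rule prod_add[OF assms])
  also have "\<dots> = (\<Sum>X\<in>Pow A. (\<Prod>j\<in>X. c j) * t ^ card X)"
    by (simp add: prod.distrib mult.commute)
  also have "\<dots> = (\<Sum>k\<le>card A. (\<Sum>X\<in>{X. X \<in> Pow A \<and> card X = k}. (\<Prod>j\<in>X. c j) * t ^ card X))"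
    by (rule sum.group[symmetric]) (use assms in \<open>auto intro: card_mono\<close>)
  also have "\<dots> = (\<Sum>k\<le>card A. esym k c A * t ^ k)"
    unfolding esym_def by (auto simp: sum_distrib_right intro!: sum.cong)
  finally show ?thesis .
qed

lemma trig_Qp1: "(1 - 4 * sin (x::real) ^ 2) * cos x = cos (3 * x)"
  unfolding cos_treble_cos sin_squared_eq by (simp add: algebra_simps power3_eq_cube power2_eq_square)

lemma trig_step: "cos ((a::real) + 2 * x) = 2 * (1 - 2 * sin x ^ 2) * cos a - cos (a - 2 * x)"
proof -
  have "cos (a+2*x) = 2*cos(2*x)*cos a - cos(a - 2*x)" using cos_times_cos[of a "2*x"] by (simp add: field_simps)
  thus ?thesis by (simp add: cos_double_sin)
qed


lemma trig_Qp: "poly (Qp n) (sin x ^ 2) * cos x = cos ((2 * real n + 1) * x)"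
proof (induction n rule: Qp.induct)
  case 1
  then show ?case by simp
next
  case 2
  then show ?case using trig_Qp1[of x] by (simp add: algebra_simps)
next
  case (3 n)
  let ?s = "sin x ^ 2"
  have "poly (Qp (Suc (Suc n))) ?s * cos x
      = 2 * (1 - 2 * ?s) * (poly (Qp (Suc n)) ?s * cos x) - poly (Qp n) ?s * cos x"
    by (simp add: algebra_simps)
  also have "\<dots> = 2 * (1 - 2 * ?s) * cos ((2 * real (Suc n) + 1) * x) - cos ((2 * real n + 1) * x)"
    using 3 by simp
  also have "\<dots> = cos ((2 * real (Suc n) + 1) * x + 2 * x)"
  proof -
    have "(2 * real (Suc n) + 1) * x - 2 * x = (2 * real n + 1) * x" by (simp add: algebra_simps)
    thus ?thesis using trig_step[of "(2 * real (Suc n) + 1) * x" x] by simp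
  qed
  also have "(2 * real (Suc n) + 1) * x + 2 * x = (2 * real (Suc (Suc n)) + 1) * x"
    by (simp add: algebra_simps)
  finally show ?case .
qed

theorem mainTheorem11:
  fixes n k :: nat
  assumes "n \<ge> 1" and "k \<le> n"
  shows "esym k (\<lambda>j. (csc ((2 * real j - 1) * pi / (4 * real n + 2)))^2) {1..n}
         = fact (n + k) * 4 ^ k / (fact (2 * k) * fact (n - k))"
proof -
  define \<theta> where "\<theta> j = (2 * real j - 1) * pi / (4 * real n + 2)" for j :: nat
  define s where "s j = sin (\<theta> j) ^ 2" for j
  define c where "c j = (csc ((2 * real j - 1) * pi / (4 * real n + 2)))^2" for j :: nat
  define A where "A = {1..n}"
  define Q where "Q = Qp n"
  have th: "0 < \<theta> j \<and> \<theta> j < pi / 2" if "j \<in> A" for j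
  proof -
    have j: "1 \<le> j" "j \<le> n" using that A_def by auto
    have "\<theta> j = ((2 * real j - 1) / (4 * real n + 2)) * pi" unfolding \<theta>_def by simp
    moreover have "0 < (2 * real j - 1) / (4 * real n + 2)" using j by (simp add: field_simps)
    moreover have "(2 * real j - 1) / (4 * real n + 2) < 1 / 2" using j by (simp add: field_simps)
    ultimately show ?thesis using pi_gt_zero
      by (metis mult_pos_pos mult_strict_right_mono divide_inverse mult_1 mult.commute)
  qed
  have spos: "0 < s j" if "j \<in> A" for j
  proof -
    have "0 < sin (\<theta> j)" using th[OF that] by (intro sin_gt_zero2) auto
    thus ?thesis unfolding s_def by simp
  qed
  have cs: "c j = 1 / s j" for j
    unfolding c_def s_def \<theta>_def csc_def by (simp add: power_one_over)
  have inj: "inj_on s A"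
  proof
    fix i j assume ij: "i \<in> A" "j \<in> A" "s i = s j"
    have p: "0 < sin (\<theta> i)" "0 < sin (\<theta> j)"
      using th[OF ij(1)] th[OF ij(2)] by (auto intro: sin_gt_zero2)
    have "sin (\<theta> i) = sin (\<theta> j)"
      using ij(3) p unfolding s_def by (auto intro: power2_eq_imp_eq)
    moreover have "- (pi/2) \<le> \<theta> i" "\<theta> i \<le> pi/2" "- (pi/2) \<le> \<theta> j" "\<theta> j \<le> pi/2"
      using th[OF ij(1)] th[OF ij(2)] by linarith+
    ultimately have "\<theta> i = \<theta> j" using sin_inj_pi by blast
    hence "(2 * real i - 1) * pi / (4 * real n + 2) = (2 * real j - 1) * pi / (4 * real n + 2)"
      unfolding \<theta>_def .
    hence "(2 * real i - 1) * pi = (2 * real j - 1) * pi"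
    proof -
      have "4 * real n + 2 \<noteq> 0" by (metis add_nonneg_pos of_nat_0_le_iff mult_nonneg_nonneg zero_less_numeral less_irrefl zero_le_numeral)
      thus ?thesis using \<open>(2 * real i - 1) * pi / (4 * real n + 2) = (2 * real j - 1) * pi / (4 * real n + 2)\<close> by simp
    qed
    thus "i = j" by simp
  qed
  have root: "poly Q (s j) = 0" if "j \<in> A" for j
  proof -
    have j: "1 \<le> j" using that A_def by auto
    have "(2 * real n + 1) * \<theta> j = of_int (2 * int j - 1) * (pi / 2)"
      unfolding \<theta>_def using j by (simp add: field_simps)
    moreover have "odd (2 * int j - 1)" by simp
    ultimately have "cos ((2 * real n + 1) * \<theta> j) = 0" using cos_zero_iff_int by blast
    hence "poly Q (s j) * cos (\<theta> j) = 0" unfolding Q_def s_def using trig_Qp by simp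
    moreover have "cos (\<theta> j) > 0" using th[OF that] by (intro cos_gt_zero_pi) auto
    ultimately show ?thesis by simp
  qed
  have coeffQ: "coeff Q i = (-4) ^ i * real ((n + i) choose (2 * i))" for i
    unfolding Q_def by (rule coeff_Qp)
  have degQ: "degree Q = n"
  proof (rule antisym)
    show "degree Q \<le> n" by (rule degree_le) (auto simp: coeffQ binomial_eq_0)
    show "n \<le> degree Q" by (rule le_degree) (simp add: coeffQ)
  qed
  have cardS: "card (s ` A) = n" using inj A_def by (simp add: card_image)
  have fac: "Q = smult (lead_coeff Q) (\<Prod>y\<in>s ` A. [:-y, 1:])"
    by (rule poly_factor) (use cardS degQ root A_def in auto)
  define L where "L = lead_coeff Q"
  have pQ: "poly Q x = L * (\<Prod>j\<in>A. x - s j)" for x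
  proof -
    have "poly Q x = L * (\<Prod>y\<in>s ` A. x - y)"
      by (subst fac) (simp add: poly_prod L_def)
    also have "\<dots> = L * (\<Prod>j\<in>A. x - s j)" by (simp add: prod.reindex[OF inj])
    finally show ?thesis .
  qed
  have "poly Q 0 = 1" by (simp add: poly_0_coeff_0 coeffQ)
  hence L1: "L * (\<Prod>j\<in>A. - s j) = 1" using pQ[of 0] by simp
  have pQ2: "poly Q x = (\<Prod>j\<in>A. (- x) * c j + 1)" for x
  proof -
    have Pn: "(\<Prod>j\<in>A. - s j) \<noteq> 0" using L1 by auto
    hence Ld: "L = 1 / (\<Prod>j\<in>A. - s j)" using L1 by (simp add: eq_divide_eq)
    have "poly Q x = (\<Prod>j\<in>A. x - s j) / (\<Prod>j\<in>A. - s j)"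
      using pQ[of x] unfolding Ld by simp
    also have "\<dots> = (\<Prod>j\<in>A. (x - s j) / (- s j))" by (simp only: prod_dividef)
    also have "\<dots> = (\<Prod>j\<in>A. (- x) * c j + 1)"
    proof (rule prod.cong)
      fix j assume "j \<in> A"
      hence "s j \<noteq> 0" using spos by force
      thus "(x - s j) / (- s j) = (- x) * c j + 1" by (simp add: cs field_simps)
    qed simp
    finally show ?thesis .
  qed
  have fA: "finite A" "card A = n" unfolding A_def by auto
  have H: "\<forall>x. (\<Sum>i\<le>n. (esym i c A * (-1) ^ i) * x ^ i) = (\<Sum>i\<le>n. coeff Q i * x ^ i)"
  proof
    fix x :: real
    have "(\<Sum>i\<le>n. coeff Q i * x ^ i) = poly Q x" by (simp add: poly_altdef degQ)
    also have "\<dots> = (\<Sum>i\<le>n. esym i c A * (- x) ^ i)" using pQ2[of x] vieta[OF fA(1), of "- x" c] fA(2) by (simp only:)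
    also have "\<dots> = (\<Sum>i\<le>n. (esym i c A * (-1) ^ i) * x ^ i)"
      by (intro sum.cong refl) (simp add: power_minus[of x])
    finally show "(\<Sum>i\<le>n. (esym i c A * (-1) ^ i) * x ^ i) = (\<Sum>i\<le>n. coeff Q i * x ^ i)" ..
  qed
  have "\<forall>i\<le>n. esym i c A * (-1) ^ i = coeff Q i" using H by (simp only: polyfun_eq_coeffs)
  hence "esym k c A * (-1) ^ k = coeff Q k" using assms(2) by blast
  hence "esym k c A * (-1) ^ k = (-1) ^ k * (4 ^ k * real ((n + k) choose (2 * k)))"
    by (simp only: coeffQ power_minus[of "4::real"] mult.assoc)
  hence e: "esym k c A = 4 ^ k * real ((n + k) choose (2 * k))" by (simp add: mult.commute)
  have "real ((n + k) choose (2 * k)) = fact (n + k) / (fact (2 * k) * fact (n + k - 2 * k))"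
    by (rule binomial_fact) (use assms in auto)
  moreover have "n + k - 2 * k = n - k" by simp
  ultimately show ?thesis using e unfolding c_def A_def by simp
qed

end
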